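(* Let $n\ge1$ and $\bar S=\{s_1<s_2<\cdots<s_k\}\subseteq[n-1]$ (possibly empty, $k\ge0$), and put $s_0=0$, $s_{k+1}=n$. Let $\hat\alpha_n^-(\bar S)$ be the number of $\sigma\in\mathcal B_n$ with $\sigma(1)<0$ and $\hat D_B(\sigma)\subseteq\bar S$. Then $$\hat\alpha_n^-(\bar S)=\binom{n}{s_1-s_0,\,s_2-s_1,\,\dots,\,s_{k+1}-s_k}\cdot S_{s_1-s_0}\cdot\prod_{j=2}^{k+1}2^{\,s_j-s_{j-1}}E_{s_j-s_{j-1}}.$$
   Context: $\mathcal B_n$ is the set of signed permutations (bijections $\sigma$ of $\{\pm1,\dots,\pm n\}$ with $\sigma(-i)=-\sigma(i)$), written as words $\sigma(1)\cdots\sigma(n)$ with $\sigma(0)=0$. $\hat D_B(\sigma)$ is the set of $i\in\{0\}\cup[n-1]$ such that either $\sigma(i)<\sigma(i+1)$ and $i$ is even, or $\sigma(i)>\sigma(i+1)$ and $i$ is odd. $E_m$ is the Euler number: the number of permutations $\tau\in\mathfrak S_m$ with $\tau(1)>\tau(2)<\tau(3)>\tau(4)<\cdots$ (so $\sum_{m\ge0}E_m x^m/m!=\tan x+\sec x$); the number of such down-up alternating signed permutations in $\mathcal B_m$ is $2^mE_m$. $S_m$ (number of snakes) is the number of $\tau\in\mathcal B_m$ with $\tau(1)>\tau(2)<\tau(3)>\cdots$ and $\tau(1)>0$. The multinomial coefficient is $\binom{n}{\gamma_1,\dots,\gamma_l}=n!/(\gamma_1!\cdots\gamma_l!)$. 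*)

theory Defs
  imports "HOL-Combinatorics.Combinatorics"
begin

text \<open>Signed permutations of [n]: bijections of {-n..n}-{0} with sigma(-i) = -sigma(i),
  extended by the identity outside (so sigma 0 = 0 as in the paper).\<close>
definition signed_perms :: "nat \<Rightarrow> (int \<Rightarrow> int) set" where
  "signed_perms n = {\<sigma>. bij_betw \<sigma> ({- int n..int n} - {0}) ({- int n..int n} - {0})
      \<and> (\<forall>i. \<sigma> (- i) = - \<sigma> i)
      \<and> (\<forall>i. i \<notin> {- int n..int n} - {0} \<longrightarrow> \<sigma> i = i)}"

definition DB_hat :: "nat \<Rightarrow> (int \<Rightarrow> int) \<Rightarrow> nat set" where
  "DB_hat n \<sigma> = {i \<in> {0..<n}. (\<sigma> (int i) < \<sigma> (int i + 1) \<and> even i)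
                               \<or> (\<sigma> (int i) > \<sigma> (int i + 1) \<and> odd i)}"

definition down_up :: "nat \<Rightarrow> (int \<Rightarrow> int) \<Rightarrow> bool" where
  "down_up m \<tau> = (\<forall>i\<in>{1..<m}. (odd i \<longrightarrow> \<tau> (int i) > \<tau> (int i + 1))
                              \<and> (even i \<longrightarrow> \<tau> (int i) < \<tau> (int i + 1)))"

definition euler_num :: "nat \<Rightarrow> nat" where
  "euler_num m = card {\<tau> :: int \<Rightarrow> int. \<tau> permutes {1..int m} \<and> down_up m \<tau>}"

definition snake_num :: "nat \<Rightarrow> nat" where
  "snake_num m = card {\<tau> \<in> signed_perms m. down_up m \<tau> \<and> \<tau> 1 > 0}"

definition multinomial :: "nat \<Rightarrow> nat list \<Rightarrow> nat" where
  "multinomial n gs = fact n div (\<Prod>g\<leftarrow>gs. fact g)"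

end

theory Submission
  imports Defs
begin


definition smono :: "int set \<Rightarrow> (int \<Rightarrow> int) \<Rightarrow> bool" where
  "smono A f = (\<forall>x\<in>A. \<forall>y\<in>A. x < y \<longrightarrow> f x < f y)"

lemma smono_iff: "smono A f \<Longrightarrow> x \<in> A \<Longrightarrow> y \<in> A \<Longrightarrow> (f x < f y) = (x < y)"
  unfolding smono_def by (metis less_asym linorder_neqE)

lemma smono_sub: "smono A f \<Longrightarrow> B \<subseteq> A \<Longrightarrow> smono B f"
  unfolding smono_def by blast

lemma smono_inj: "smono A f \<Longrightarrow> inj_on f A"
  unfolding smono_def inj_on_def by (metis less_asym linorder_neqE)

lemma enum_iso:
  fixes X :: "int set"
  assumes "finite X"
  shows "bij_betw ((!) (sorted_list_of_set X)) {..<card X} X"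
    and "\<And>i j. i < j \<Longrightarrow> j < card X \<Longrightarrow> sorted_list_of_set X ! i < sorted_list_of_set X ! j"
proof -
  show "bij_betw ((!) (sorted_list_of_set X)) {..<card X} X"
    by (rule bij_betw_nth) (use assms in auto)
  fix i j assume "i < j" "j < card X"
  then show "sorted_list_of_set X ! i < sorted_list_of_set X ! j"
    using sorted_wrt_nth_less[OF sorted_list_of_set.strict_sorted_key_list_of_set]
    by (simp add: assms)
qed

lemma order_iso:
  fixes X Y :: "int set"
  assumes "finite X" "finite Y" "card X = card Y"
  shows "\<exists>\<phi>. bij_betw \<phi> X Y \<and> smono X \<phi>"
proof -
  define hX where "hX = (!) (sorted_list_of_set X)"
  define hY where "hY = (!) (sorted_list_of_set Y)"
  have bX: "bij_betw hX {..<card X} X" and mX: "\<And>i j. i < j \<Longrightarrow> j < card X \<Longrightarrow> hX i < hX j"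
    using enum_iso[OF assms(1)] unfolding hX_def by auto
  have bY: "bij_betw hY {..<card X} Y" and mY: "\<And>i j. i < j \<Longrightarrow> j < card X \<Longrightarrow> hY i < hY j"
    using enum_iso[OF assms(2)] unfolding hY_def by (auto simp: assms(3))
  define iX where "iX = the_inv_into {..<card X} hX"
  have biX: "bij_betw iX X {..<card X}" unfolding iX_def by (rule bij_betw_the_inv_into[OF bX])
  have hiX: "\<And>x. x \<in> X \<Longrightarrow> hX (iX x) = x" unfolding iX_def
    using bX by (simp add: bij_betw_def f_the_inv_into_f)
  have "bij_betw (hY \<circ> iX) X Y" by (rule bij_betw_trans[OF biX bY])
  moreover have "smono X (hY \<circ> iX)"
    unfolding smono_def
  proof (intro ballI impI)
    fix x y assume xy: "x \<in> X" "y \<in> X" "x < y"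
    have i: "iX x < card X" "iX y < card X" using biX xy by (auto simp: bij_betw_def)
    have "iX x < iX y"
    proof (rule ccontr)
      assume "\<not> iX x < iX y"
      then have "iX y < iX x \<or> iX y = iX x" by auto
      then have "y \<ge> x" using mX[of "iX y" "iX x"] i hiX xy by (metis less_imp_le order_refl)
      then show False using xy
        by (metis \<open>iX y < iX x \<or> iX y = iX x\<close> hiX i(1) leD mX)
    qed
    then show "(hY \<circ> iX) x < (hY \<circ> iX) y" using mY i by simp
  qed
  ultimately show ?thesis by blast
qed




definition SW :: "int set \<Rightarrow> int list set" where
  "SW X = {w. distinct (map abs w) \<and> set (map abs w) = X}"
definition US :: "int set \<Rightarrow> int list set" where
  "US V = {w. distinct w \<and> set w = V}"

lemma finite_US: "finite V \<Longrightarrow> finite (US V)"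
proof -
  assume f: "finite V"
  have "US V \<subseteq> {w. set w \<subseteq> V \<and> length w = card V}"
    unfolding US_def using distinct_card by fastforce
  then show ?thesis using finite_lists_length_eq[OF f] finite_subset by blast
qed

lemma finite_SW: "finite X \<Longrightarrow> finite (SW X)"
proof -
  assume f: "finite X"
  have "SW X \<subseteq> {w. set w \<subseteq> X \<union> uminus ` X \<union> {0} \<and> length w = card X}"
  proof
    fix w assume w: "w \<in> SW X"
    have "length w = card X" using w distinct_card[of "map abs w"] unfolding SW_def by simp
    moreover have "set w \<subseteq> X \<union> uminus ` X \<union> {0}"
    proof
      fix x assume "x \<in> set w"
      then have "\<bar>x\<bar> \<in> X" using w unfolding SW_def by auto
      then show "x \<in> X \<union> uminus ` X \<union> {0}"
      proof (cases "x \<ge> 0")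
        case False
        then have "x = - \<bar>x\<bar>" by simp
        then show ?thesis using \<open>\<bar>x\<bar> \<in> X\<close> by blast
      qed simp
    qed
    ultimately show "w \<in> {w. set w \<subseteq> X \<union> uminus ` X \<union> {0} \<and> length w = card X}" by auto
  qed
  moreover have "finite (X \<union> uminus ` X \<union> {0})" using f by auto
  ultimately show ?thesis using finite_subset[OF _ finite_lists_length_eq] by blast
qed

lemma us_le:
  assumes fV': "finite V'" and b: "bij_betw \<phi> V V'" and m: "smono V \<phi>"
    and P: "\<And>g w. smono (set w) g \<Longrightarrow> P (map g w) = P w"
  shows "card {w\<in>US V. P w} \<le> card {w\<in>US V'. P w}"
proof (rule card_inj_on_le)
  show "finite {w\<in>US V'. P w}" using finite_US[OF fV'] by auto
  show "inj_on (map \<phi>) {w\<in>US V. P w}"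
    unfolding inj_on_def US_def
    by (metis (mono_tags, lifting) b bij_betw_def inj_on_map_eq_map mem_Collect_eq sup.idem)
  show "map \<phi> ` {w\<in>US V. P w} \<subseteq> {w\<in>US V'. P w}"
  proof safe
    fix w assume w: "w \<in> US V" "P w"
    have sm: "smono (set w) \<phi>" using m w(1) unfolding US_def smono_def by auto
    show "map \<phi> w \<in> US V'" using w(1) b unfolding US_def bij_betw_def
      by (auto simp: distinct_map inj_on_subset)
    show "P (map \<phi> w)" using P[OF sm] w(2) by simp
  qed
qed

lemma us_inv:
  assumes "finite V" "finite V'" "card V = card V'"
    and P: "\<And>g w. smono (set w) g \<Longrightarrow> P (map g w) = P w"
  shows "card {w\<in>US V. P w} = card {w\<in>US V'. P w}"
proof -
  obtain \<phi> where 1: "bij_betw \<phi> V V'" "smono V \<phi>" using order_iso[OF assms(1,2,3)] by blast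
  obtain \<psi> where 2: "bij_betw \<psi> V' V" "smono V' \<psi>" using order_iso[OF assms(2,1) assms(3)[symmetric]] by blast
  have a: "card {w\<in>US V. P w} \<le> card {w\<in>US V'. P w}"
    by (rule us_le[where P=P, OF assms(2) 1 P])
  have b: "card {w\<in>US V'. P w} \<le> card {w\<in>US V. P w}"
    by (rule us_le[where P=P, OF assms(1) 2 P])
  from a b show ?thesis by (rule antisym)
qed

definition oddext :: "(int \<Rightarrow> int) \<Rightarrow> int \<Rightarrow> int" where
  "oddext \<phi> x = (if x > 0 then \<phi> x else if x < 0 then - \<phi> (- x) else 0)"

lemma oddext_smono:
  assumes m: "smono X \<phi>" and pos: "\<And>x. x \<in> X \<Longrightarrow> \<phi> x > 0" and Xp: "\<And>x. x \<in> X \<Longrightarrow> x > 0"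
  shows "smono (X \<union> uminus ` X \<union> {0}) (oddext \<phi>)"
  unfolding smono_def
proof (intro ballI impI)
  fix x y assume x: "x \<in> X \<union> uminus ` X \<union> {0}" and y: "y \<in> X \<union> uminus ` X \<union> {0}" and xy: "x < y"
  have mm: "\<And>a b. a \<in> X \<Longrightarrow> b \<in> X \<Longrightarrow> a < b \<Longrightarrow> \<phi> a < \<phi> b" using m unfolding smono_def by auto
  consider (a) "x \<in> X" | (b) "-x \<in> X" "x < 0" | (c) "x = 0"
    using x Xp by force
  then show "oddext \<phi> x < oddext \<phi> y"
  proof cases
    case a
    then have "y \<in> X" using y xy Xp[of x] Xp[of "-y"] by force
    then show ?thesis using a xy Xp mm unfolding oddext_def by auto
  next
    case b
    consider (ya) "y \<in> X" | (yb) "-y \<in> X" "y < 0" | (yc) "y = 0" using y Xp by force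
    then show ?thesis
    proof cases
      case ya
      have "0 < \<phi> y" "0 < \<phi> (-x)" "0 < y" using ya b pos Xp by auto
      then show ?thesis using b unfolding oddext_def by auto
    next
      case yb then show ?thesis using b xy mm[of "-y" "-x"] unfolding oddext_def by auto
    next
      case yc then show ?thesis using b pos unfolding oddext_def by force
    qed
  next
    case c
    then have "y \<in> X" using y xy Xp by force
    then show ?thesis using c xy pos unfolding oddext_def by auto
  qed
qed

lemma sw_le:
  assumes fY: "finite Y" and b: "bij_betw \<phi> X Y" and m: "smono X \<phi>"
    and Xp: "\<And>x. x \<in> X \<Longrightarrow> x > 0" and Yp: "\<And>x. x \<in> Y \<Longrightarrow> x > 0"
    and P: "\<And>g w. smono (insert 0 (set w)) g \<Longrightarrow> g 0 = 0 \<Longrightarrow> P (map g w) = P w"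
  shows "card {w\<in>SW X. P w} \<le> card {w\<in>SW Y. P w}"
proof (rule card_inj_on_le)
  let ?Z = "X \<union> uminus ` X \<union> {0}"
  have php: "\<And>x. x \<in> X \<Longrightarrow> \<phi> x > 0"
  proof -
    fix x assume "x \<in> X"
    then have "\<phi> x \<in> Y" using b by (meson bij_betwE)
    then show "\<phi> x > 0" by (rule Yp)
  qed
  have injphi: "inj_on \<phi> X" and imphi: "\<phi> ` X = Y" using b by (auto simp: bij_betw_def)
  have sm: "smono ?Z (oddext \<phi>)"
    by (rule oddext_smono[OF m php Xp])
  have sub: "\<And>w. w \<in> SW X \<Longrightarrow> set w \<subseteq> ?Z"
  proof
    fix w x assume "w \<in> SW X" "x \<in> set w"
    then have "\<bar>x\<bar> \<in> X" unfolding SW_def by auto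
    then show "x \<in> ?Z"
    proof (cases "x \<ge> 0")
      case False
      then have "x = - \<bar>x\<bar>" by simp
      then show ?thesis using \<open>\<bar>x\<bar> \<in> X\<close> by blast
    qed simp
  qed
  show "finite {w\<in>SW Y. P w}" using finite_SW[OF fY] by auto
  show "inj_on (map (oddext \<phi>)) {w\<in>SW X. P w}"
  proof (rule inj_onI)
    fix u v assume u: "u \<in> {w\<in>SW X. P w}" and v: "v \<in> {w\<in>SW X. P w}" and e: "map (oddext \<phi>) u = map (oddext \<phi>) v"
    have "set u \<union> set v \<subseteq> ?Z" using sub u v by auto
    then have "inj_on (oddext \<phi>) (set u \<union> set v)"
      using inj_on_subset[OF smono_inj[OF sm]] by blast
    then show "u = v" using e by (simp add: inj_on_map_eq_map)
  qed
  show "map (oddext \<phi>) ` {w\<in>SW X. P w} \<subseteq> {w\<in>SW Y. P w}"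
  proof (rule image_subsetI)
    fix w assume "w \<in> {w\<in>SW X. P w}"
    then have w: "w \<in> SW X" "P w" by auto
    have z: "insert 0 (set w) \<subseteq> ?Z" using sub[OF w(1)] by auto
    have sm': "smono (insert 0 (set w)) (oddext \<phi>)" using smono_sub[OF sm z] .
    have ab: "map abs (map (oddext \<phi>) w) = map \<phi> (map abs w)"
      unfolding map_map
    proof (rule map_cong[OF refl])
      fix x assume "x \<in> set w"
      then have "\<bar>x\<bar> \<in> X" using w(1) unfolding SW_def by auto
      then show "(abs \<circ> oddext \<phi>) x = (\<phi> \<circ> abs) x" using php[of "\<bar>x\<bar>"] Xp[of "\<bar>x\<bar>"]
        by (auto simp: oddext_def abs_if)
    qed
    have Pm: "P (map (oddext \<phi>) w)" using P[OF sm'] w(2) by (simp add: oddext_def)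
    have dw: "distinct (map abs w)" and sw: "set (map abs w) = X" using w(1) unfolding SW_def by auto
    have "distinct (map abs w) \<and> inj_on \<phi> (set (map abs w))" using dw injphi unfolding sw by blast
    moreover have "distinct (map \<phi> (map abs w)) = (distinct (map abs w) \<and> inj_on \<phi> (set (map abs w)))"
      by (rule distinct_map)
    ultimately have "distinct (map \<phi> (map abs w))" by blast
    moreover note \<open>distinct (map \<phi> (map abs w))\<close>
    moreover have "set (map \<phi> (map abs w)) = Y"
    proof -
      have "set (map \<phi> (map abs w)) = \<phi> ` set (map abs w)" by (rule set_map)
      then show ?thesis using sw imphi by simp
    qed
    ultimately have "map (oddext \<phi>) w \<in> SW Y"
      unfolding SW_def mem_Collect_eq ab by blast
    note this Pm
    then show "map (oddext \<phi>) w \<in> {w\<in>SW Y. P w}" by blast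
  qed
qed

lemma sw_inv:
  assumes "finite X" "finite Y" "card X = card Y"
    and Xp: "\<And>x. x \<in> X \<Longrightarrow> x > 0" and Yp: "\<And>x. x \<in> Y \<Longrightarrow> x > 0"
    and P: "\<And>g w. smono (insert 0 (set w)) g \<Longrightarrow> g 0 = 0 \<Longrightarrow> P (map g w) = P w"
  shows "card {w\<in>SW X. P w} = card {w\<in>SW Y. P w}"
proof -
  obtain \<phi> where 1: "bij_betw \<phi> X Y" "smono X \<phi>" using order_iso[OF assms(1,2,3)] by blast
  obtain \<psi> where 2: "bij_betw \<psi> Y X" "smono Y \<psi>" using order_iso[OF assms(2,1) assms(3)[symmetric]] by blast
  have a: "card {w\<in>SW X. P w} \<le> card {w\<in>SW Y. P w}"
    by (rule sw_le[where P=P, OF assms(2) 1 Xp Yp P])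
  have b: "card {w\<in>SW Y. P w} \<le> card {w\<in>SW X. P w}"
    by (rule sw_le[where P=P, OF assms(1) 2 Yp Xp P])
  from a b show ?thesis by (rule antisym)
qed




definition W :: "nat \<Rightarrow> (int \<Rightarrow> int) \<Rightarrow> int list" where
  "W n \<sigma> = map (\<lambda>i. \<sigma> (int i)) [1..<Suc n]"

lemma nat_int_p1[simp]: "nat (int i + 1) = Suc i" by arith

lemma W_len[simp]: "length (W n \<sigma>) = n" by (simp add: W_def)
lemma W_nth[simp]: "j < n \<Longrightarrow> W n \<sigma> ! j = \<sigma> (int j + 1)" by (simp add: W_def add.commute del: upt_Suc)

lemma sp_basic:
  assumes "\<sigma> \<in> signed_perms n"
  shows "bij_betw \<sigma> ({- int n..int n} - {0}) ({- int n..int n} - {0})"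
    "\<And>i. \<sigma> (- i) = - \<sigma> i" "\<And>i. i \<notin> {- int n..int n} - {0} \<Longrightarrow> \<sigma> i = i"
  using assms unfolding signed_perms_def by auto

lemma W_in_SW:
  assumes s: "\<sigma> \<in> signed_perms n"
  shows "W n \<sigma> \<in> SW {1..int n}"
proof -
  let ?D = "{- int n..int n} - {0}"
  note b = sp_basic(1)[OF s] and od = sp_basic(2)[OF s]
  have inj: "inj_on \<sigma> ?D" and im: "\<sigma> ` ?D = ?D" using b by (auto simp: bij_betw_def)
  have "distinct (map abs (W n \<sigma>))"
    unfolding distinct_conv_nth
  proof (intro allI impI)
    fix i j assume ij: "i < length (map abs (W n \<sigma>))" "j < length (map abs (W n \<sigma>))" "i \<noteq> j"
    show "map abs (W n \<sigma>) ! i \<noteq> map abs (W n \<sigma>) ! j"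
    proof
      assume e: "map abs (W n \<sigma>) ! i = map abs (W n \<sigma>) ! j"
      then have "\<bar>\<sigma> (int i + 1)\<bar> = \<bar>\<sigma> (int j + 1)\<bar>" using ij by simp
      moreover have "\<sigma> (- (int j + 1)) = - \<sigma> (int j + 1)" using od by blast
      ultimately have "\<sigma> (int i + 1) = \<sigma> (int j + 1) \<or> \<sigma> (int i + 1) = \<sigma> (- (int j + 1))"
        by (auto simp: abs_if split: if_splits)
      moreover have "int i + 1 \<in> ?D" "int j + 1 \<in> ?D" "- (int j + 1) \<in> ?D" using ij by auto
      ultimately have "int i + 1 = int j + 1 \<or> int i + 1 = - (int j + 1)"
        using inj by (meson inj_onD)
      then show False using ij(3) by auto
    qed
  qed
  moreover have "set (map abs (W n \<sigma>)) = {1..int n}"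
  proof
    show "set (map abs (W n \<sigma>)) \<subseteq> {1..int n}"
    proof
      fix y assume "y \<in> set (map abs (W n \<sigma>))"
      then obtain j where j: "j < n" "y = \<bar>\<sigma> (int j + 1)\<bar>" by (auto simp: in_set_conv_nth)
      then have "int j + 1 \<in> ?D" by auto
      then have "\<sigma> (int j + 1) \<in> ?D" using im by blast
      then show "y \<in> {1..int n}" using j by auto
    qed
    show "{1..int n} \<subseteq> set (map abs (W n \<sigma>))"
    proof
      fix k assume k: "k \<in> {1..int n}"
      then have "k \<in> ?D" by auto
      then obtain i where i: "i \<in> ?D" "\<sigma> i = k" using im by (metis imageE)
      define i' where "i' = \<bar>i\<bar>"
      have "\<bar>\<sigma> i'\<bar> = k" using i k od unfolding i'_def by (cases "i \<ge> 0") auto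
      moreover have "i' \<ge> 1" "i' \<le> int n" using i unfolding i'_def by auto
      ultimately have "map abs (W n \<sigma>) ! (nat i' - 1) = k" "nat i' - 1 < length (map abs (W n \<sigma>))"
        by auto
      then show "k \<in> set (map abs (W n \<sigma>))" by (metis nth_mem)
    qed
  qed
  ultimately show ?thesis unfolding SW_def by auto
qed

definition Winv :: "nat \<Rightarrow> int list \<Rightarrow> int \<Rightarrow> int" where
  "Winv n w i = (if 1 \<le> i \<and> i \<le> int n then w ! (nat i - 1)
     else if - int n \<le> i \<and> i \<le> -1 then - (w ! (nat (- i) - 1)) else i)"

lemma Winv_sp:
  assumes w: "w \<in> SW {1..int n}"
  shows "Winv n w \<in> signed_perms n" "W n (Winv n w) = w"
proof -
  let ?D = "{- int n..int n} - {0}"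
  have dab: "distinct (map abs w)" and sab: "set (map abs w) = {1..int n}" using w unfolding SW_def by auto
  have len: "length w = n" using distinct_card[OF dab] sab by simp
  have rng: "\<And>k. k < n \<Longrightarrow> \<bar>w ! k\<bar> \<in> {1..int n}"
  proof -
    fix k assume "k < n"
    then have "map abs w ! k \<in> set (map abs w)" by (intro nth_mem) (simp add: len)
    then have "map abs w ! k \<in> {1..int n}" unfolding sab .
    then show "\<bar>w ! k\<bar> \<in> {1..int n}" using \<open>k < n\<close> len sab by simp
  qed
  have dk: "\<And>a b. a < n \<Longrightarrow> b < n \<Longrightarrow> \<bar>w ! a\<bar> = \<bar>w ! b\<bar> \<Longrightarrow> a = b"
  proof -
    fix a b assume ab: "a < n" "b < n" "\<bar>w ! a\<bar> = \<bar>w ! b\<bar>"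
    then have "map abs w ! a = map abs w ! b" using len by simp
    then show "a = b" using nth_eq_iff_index_eq[OF dab] ab len by simp
  qed
  have od: "\<And>i. Winv n w (- i) = - Winv n w i" unfolding Winv_def by auto
  have outside: "\<And>i. i \<notin> ?D \<Longrightarrow> Winv n w i = i" unfolding Winv_def by auto
  have into: "Winv n w ` ?D \<subseteq> ?D"
  proof
    fix y assume "y \<in> Winv n w ` ?D"
    then obtain i where i: "i \<in> ?D" "y = Winv n w i" by blast
    show "y \<in> ?D"
    proof (cases "i > 0")
      case True
      then have "y = w ! (nat i - 1)" "nat i - 1 < n" using i unfolding Winv_def by auto
      then show ?thesis using rng[of "nat i - 1"] by (cases "w ! (nat i - 1) \<ge> 0") auto
    next
      case False
      then have "y = - w ! (nat (-i) - 1)" "nat (-i) - 1 < n" using i unfolding Winv_def by auto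
      then show ?thesis using rng[of "nat (-i) - 1"] by (cases "w ! (nat (-i) - 1) \<ge> 0") auto
    qed
  qed
  have inj: "inj_on (Winv n w) ?D"
  proof (rule inj_onI)
    fix x y assume x: "x \<in> ?D" and y: "y \<in> ?D" and e: "Winv n w x = Winv n w y"
    define a where "a = nat \<bar>x\<bar> - 1"
    define b where "b = nat \<bar>y\<bar> - 1"
    have ab: "a < n" "b < n" using x y unfolding a_def b_def by auto
    have ex: "Winv n w x = (if x > 0 then w ! a else - w ! a)" using x unfolding Winv_def a_def by auto
    have ey: "Winv n w y = (if y > 0 then w ! b else - w ! b)" using y unfolding Winv_def b_def by auto
    have "\<bar>w ! a\<bar> = \<bar>w ! b\<bar>" using e ex ey by (auto split: if_splits)
    then have "a = b" using dk ab by blast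
    then have xy: "\<bar>x\<bar> = \<bar>y\<bar>" using x y unfolding a_def b_def by auto
    have "w ! a \<noteq> 0" using rng[OF ab(1)] by auto
    then show "x = y" using e ex ey xy \<open>a = b\<close> x y by (auto split: if_splits)
  qed
  have "Winv n w ` ?D = ?D" using endo_inj_surj[OF _ into inj] by auto
  then have "bij_betw (Winv n w) ?D ?D" using inj by (simp add: bij_betw_def)
  then show "Winv n w \<in> signed_perms n" unfolding signed_perms_def using od outside by auto
  show "W n (Winv n w) = w"
    by (rule nth_equalityI) (auto simp: len Winv_def)
qed

lemma W_inj:
  assumes "\<sigma> \<in> signed_perms n" "\<tau> \<in> signed_perms n" "W n \<sigma> = W n \<tau>"
  shows "\<sigma> = \<tau>"
proof
  fix i
  have pos: "\<And>k. 1 \<le> k \<Longrightarrow> k \<le> int n \<Longrightarrow> \<sigma> k = \<tau> k"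
  proof -
    fix k :: int assume k: "1 \<le> k" "k \<le> int n"
    then have "W n \<sigma> ! (nat k - 1) = W n \<tau> ! (nat k - 1)" using assms(3) by simp
    then show "\<sigma> k = \<tau> k" using k by simp
  qed
  show "\<sigma> i = \<tau> i"
  proof (cases "i \<in> {- int n..int n} - {0}")
    case True
    then show ?thesis using pos[of i] pos[of "-i"] sp_basic(2)[OF assms(1), of "-i"] sp_basic(2)[OF assms(2), of "-i"]
      by (cases "i > 0") auto
  next
    case False
    then show ?thesis using sp_basic(3)[OF assms(1)] sp_basic(3)[OF assms(2)] by auto
  qed
qed

lemma W_bij: "bij_betw (W n) (signed_perms n) (SW {1..int n})"
  unfolding bij_betw_def
proof
  show "inj_on (W n) (signed_perms n)" using W_inj by (meson inj_onI)
  show "W n ` signed_perms n = SW {1..int n}"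
    using W_in_SW Winv_sp by (metis (no_types, lifting) image_eqI subsetI subset_antisym image_subsetI)
qed

lemma card_W:
  assumes PQ: "\<And>\<sigma>. \<sigma> \<in> signed_perms n \<Longrightarrow> P \<sigma> = Q (W n \<sigma>)"
  shows "card {\<sigma>\<in>signed_perms n. P \<sigma>} = card {w\<in>SW {1..int n}. Q w}"
proof -
  have inj: "inj_on (W n) {\<sigma>\<in>signed_perms n. P \<sigma>}"
  proof (rule inj_onI)
    fix x y assume "x \<in> {\<sigma>\<in>signed_perms n. P \<sigma>}" "y \<in> {\<sigma>\<in>signed_perms n. P \<sigma>}" "W n x = W n y"
    then show "x = y" using W_inj[of x n y] by blast
  qed
  have "W n ` {\<sigma>\<in>signed_perms n. P \<sigma>} = {w\<in>SW {1..int n}. Q w}"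
  proof
    show "W n ` {\<sigma>\<in>signed_perms n. P \<sigma>} \<subseteq> {w\<in>SW {1..int n}. Q w}"
    proof (rule image_subsetI)
      fix \<sigma> assume "\<sigma> \<in> {\<sigma>\<in>signed_perms n. P \<sigma>}"
      then have "\<sigma> \<in> signed_perms n" "P \<sigma>" by auto
      then show "W n \<sigma> \<in> {w\<in>SW {1..int n}. Q w}" using W_in_SW PQ by blast
    qed
    show "{w\<in>SW {1..int n}. Q w} \<subseteq> W n ` {\<sigma>\<in>signed_perms n. P \<sigma>}"
    proof
      fix w assume "w \<in> {w\<in>SW {1..int n}. Q w}"
      then have w: "w \<in> SW {1..int n}" "Q w" by auto
      have a: "Winv n w \<in> signed_perms n" and b: "W n (Winv n w) = w" using Winv_sp[OF w(1)] by auto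
      have "P (Winv n w)" using PQ[OF a] b w(2) by simp
      then have c: "Winv n w \<in> {\<sigma>\<in>signed_perms n. P \<sigma>}" using a by blast
      show "w \<in> W n ` {\<sigma>\<in>signed_perms n. P \<sigma>}" by (rule image_eqI[where f="W n", OF b[symmetric] c])
    qed
  qed
  then show ?thesis using card_image[OF inj] by simp
qed




definition Alt :: "nat \<Rightarrow> nat set \<Rightarrow> int list \<Rightarrow> bool" where
  "Alt p T w = (\<forall>j. 0 < j \<longrightarrow> j < length w \<longrightarrow> p + j \<notin> T \<longrightarrow>
       (if odd (p + j) then w ! (j - 1) < w ! j else w ! j < w ! (j - 1)))"

lemma Alt_inv:
  assumes "smono (set w) g"
  shows "Alt p T (map g w) = Alt p T w"
proof -
  have "\<And>j. 0 < j \<Longrightarrow> j < length w \<Longrightarrow> (g (w ! (j - 1)) < g (w ! j)) = (w ! (j - 1) < w ! j)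
      \<and> (g (w ! j) < g (w ! (j - 1))) = (w ! j < w ! (j - 1))"
    using smono_iff[OF assms] by simp
  then show ?thesis unfolding Alt_def by simp
qed

lemma Alt_parity:
  assumes "p mod 2 = q mod 2"
  shows "Alt p {} w = Alt q {} w"
proof -
  have "even p = even q" using assms by (simp add: even_iff_mod_2_eq_zero)
  then have "\<And>j. odd (p + j) = odd (q + j)" by (simp add: even_add)
  then show ?thesis unfolding Alt_def by simp
qed

lemma Alt_neg: "Alt p {} (map uminus w) = Alt (Suc p) {} w"
  unfolding Alt_def by auto

lemma AltD:
  assumes "Alt p T w" "0 < j" "j < length w" "p + j \<notin> T"
  shows "if odd (p + j) then w ! (j - 1) < w ! j else w ! j < w ! (j - 1)"
  using assms unfolding Alt_def by blast

lemma Alt_append: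
  assumes len: "length u = s" and T: "\<And>t. t \<in> T \<Longrightarrow> t < s"
  shows "Alt 0 (insert s T) (u @ v) = (Alt 0 T u \<and> Alt s {} v)"
proof
  assume A: "Alt 0 (insert s T) (u @ v)"
  show "Alt 0 T u \<and> Alt s {} v"
  proof
    show "Alt 0 T u" unfolding Alt_def
    proof (intro allI impI)
      fix j assume j: "0 < j" "j < length u" "0 + j \<notin> T"
      have "j \<notin> insert s T" using j len by auto
      have e: "(u@v) ! (j - 1) = u ! (j - 1)" "(u@v) ! j = u ! j" using j by (auto simp: nth_append)
      have "if odd (0 + j) then (u@v) ! (j - 1) < (u@v) ! j else (u@v) ! j < (u@v) ! (j - 1)"
        using AltD[OF A, of j] j \<open>j \<notin> insert s T\<close> by simp
      then show "if odd (0 + j) then u ! (j - 1) < u ! j else u ! j < u ! (j - 1)"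
        unfolding e .
    qed
    show "Alt s {} v" unfolding Alt_def
    proof (intro allI impI)
      fix j assume j: "0 < j" "j < length v" "s + j \<notin> {}"
      have "s + j \<notin> insert s T" using j T by fastforce
      have e: "(u@v) ! (s + j - 1) = v ! (j - 1)" "(u@v) ! (s + j) = v ! j"
        using j len by (auto simp: nth_append)
      have "if odd (0 + (s + j)) then (u@v) ! (s + j - 1) < (u@v) ! (s + j)
          else (u@v) ! (s + j) < (u@v) ! (s + j - 1)"
        using AltD[OF A, of "s + j"] j len \<open>s + j \<notin> insert s T\<close> by simp
      then show "if odd (s + j) then v ! (j - 1) < v ! j else v ! j < v ! (j - 1)"
        unfolding e by simp
    qed
  qed
next
  assume B: "Alt 0 T u \<and> Alt s {} v"
  show "Alt 0 (insert s T) (u @ v)" unfolding Alt_def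
  proof (intro allI impI)
    fix j assume j: "0 < j" "j < length (u @ v)" "0 + j \<notin> insert s T"
    show "if odd (0 + j) then (u @ v) ! (j - 1) < (u @ v) ! j else (u @ v) ! j < (u @ v) ! (j - 1)"
    proof (cases "j < s")
      case True
      have e: "(u@v) ! (j - 1) = u ! (j - 1)" "(u@v) ! j = u ! j" using True j len by (auto simp: nth_append)
      have "if odd (0 + j) then u ! (j - 1) < u ! j else u ! j < u ! (j - 1)"
        using AltD[of 0 T u j] B j len True by simp
      then show ?thesis unfolding e .
    next
      case False
      then have js: "j > s" using j by auto
      define k where "k = j - s"
      have k: "0 < k" "k < length v" "j = s + k" using js j len unfolding k_def by auto
      then have "if odd (s + k) then v ! (k - 1) < v ! k else v ! k < v ! (k - 1)"
        using AltD[of s "{}" v k] B by simp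
      moreover have e: "(u@v) ! (j - 1) = v ! (k - 1)" "(u@v) ! j = v ! k"
        using k len by (auto simp: nth_append)
      ultimately show ?thesis unfolding e using k by simp
    qed
  qed
qed

lemma W_nth': "0 < j \<Longrightarrow> j \<le> n \<Longrightarrow> W n \<sigma> ! (j - 1) = \<sigma> (int j)"
  using W_nth[of "j - 1" n \<sigma>] by (simp add: of_nat_diff)

lemma sp_inj:
  assumes "\<sigma> \<in> signed_perms n" "1 \<le> i" "i < int n"
  shows "\<sigma> i \<noteq> \<sigma> (i + 1)"
proof
  assume e: "\<sigma> i = \<sigma> (i + 1)"
  have "inj_on \<sigma> ({- int n..int n} - {0})" using sp_basic(1)[OF assms(1)] by (simp add: bij_betw_def)
  moreover have "i \<in> {- int n..int n} - {0}" "i + 1 \<in> {- int n..int n} - {0}" using assms by auto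
  ultimately show False using e by (metis inj_onD n_not_Suc_n add.commute add_left_cancel less_irrefl zless_add1_eq)
qed

lemma DB_trans:
  assumes s: "\<sigma> \<in> signed_perms n" and n: "n \<ge> 1" and S: "S \<subseteq> {1..n-1}"
  shows "(\<sigma> 1 < 0 \<and> DB_hat n \<sigma> \<subseteq> S) = (W n \<sigma> ! 0 < 0 \<and> Alt 0 S (W n \<sigma>))"
proof -
  have s0: "\<sigma> 0 = 0" using sp_basic(3)[OF s, of 0] by simp
  have w0: "W n \<sigma> ! 0 = \<sigma> 1" using n by simp
  have wj: "\<And>j. 0 < j \<Longrightarrow> j < n \<Longrightarrow> W n \<sigma> ! (j - 1) = \<sigma> (int j) \<and> W n \<sigma> ! j = \<sigma> (int j + 1)"
    by (simp add: of_nat_diff)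
  have ne: "\<And>j. 0 < j \<Longrightarrow> j < n \<Longrightarrow> \<sigma> (int j) \<noteq> \<sigma> (int j + 1)" using sp_inj[OF s] by simp
  have "DB_hat n \<sigma> \<subseteq> S \<longleftrightarrow> (\<forall>i. i < n \<longrightarrow> i \<notin> S \<longrightarrow> \<not> ((\<sigma> (int i) < \<sigma> (int i + 1) \<and> even i)
                               \<or> (\<sigma> (int i) > \<sigma> (int i + 1) \<and> odd i)))"
    unfolding DB_hat_def by auto
  also have "\<dots> \<longleftrightarrow> \<not> (0 < \<sigma> 1) \<and> (\<forall>j. 0 < j \<longrightarrow> j < n \<longrightarrow> j \<notin> S \<longrightarrow> \<not> ((\<sigma> (int j) < \<sigma> (int j + 1) \<and> even j)
                               \<or> (\<sigma> (int j) > \<sigma> (int j + 1) \<and> odd j)))"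
  proof -
    have "0 \<notin> S" using S by auto
    then show ?thesis using s0 n by (metis (no_types, opaque_lifting) bot_nat_0.not_eq_extremum even_zero int_ops(1) less_one of_nat_0 add_0 linorder_not_le)
  qed
  also have "(\<forall>j. 0 < j \<longrightarrow> j < n \<longrightarrow> j \<notin> S \<longrightarrow> \<not> ((\<sigma> (int j) < \<sigma> (int j + 1) \<and> even j)
                               \<or> (\<sigma> (int j) > \<sigma> (int j + 1) \<and> odd j)))
     = Alt 0 S (W n \<sigma>)"
  proof -
    have pt: "\<And>j. 0 < j \<Longrightarrow> j < n \<Longrightarrow> (\<not> ((\<sigma> (int j) < \<sigma> (int j + 1) \<and> even j)
                               \<or> (\<sigma> (int j) > \<sigma> (int j + 1) \<and> odd j)))
       = (if odd (0 + j) then W n \<sigma> ! (j - 1) < W n \<sigma> ! j else W n \<sigma> ! j < W n \<sigma> ! (j - 1))"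
    proof -
      fix j assume j: "0 < j" "j < n"
      show "?thesis j" using wj[OF j] ne[OF j] by auto
    qed
    show ?thesis unfolding Alt_def W_len
    proof
      assume L: "\<forall>j. 0 < j \<longrightarrow> j < n \<longrightarrow> j \<notin> S \<longrightarrow> \<not> ((\<sigma> (int j) < \<sigma> (int j + 1) \<and> even j)
                               \<or> (\<sigma> (int j) > \<sigma> (int j + 1) \<and> odd j))"
      show "\<forall>j. 0 < j \<longrightarrow> j < n \<longrightarrow> 0 + j \<notin> S \<longrightarrow>
         (if odd (0 + j) then W n \<sigma> ! (j - 1) < W n \<sigma> ! j else W n \<sigma> ! j < W n \<sigma> ! (j - 1))"
        using L pt by simp
    next
      assume R: "\<forall>j. 0 < j \<longrightarrow> j < n \<longrightarrow> 0 + j \<notin> S \<longrightarrow>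
         (if odd (0 + j) then W n \<sigma> ! (j - 1) < W n \<sigma> ! j else W n \<sigma> ! j < W n \<sigma> ! (j - 1))"
      show "\<forall>j. 0 < j \<longrightarrow> j < n \<longrightarrow> j \<notin> S \<longrightarrow> \<not> ((\<sigma> (int j) < \<sigma> (int j + 1) \<and> even j)
                               \<or> (\<sigma> (int j) > \<sigma> (int j + 1) \<and> odd j))"
      proof (intro allI impI)
        fix j assume j: "0 < j" "j < n" "j \<notin> S"
        show "\<not> ((\<sigma> (int j) < \<sigma> (int j + 1) \<and> even j) \<or> (\<sigma> (int j) > \<sigma> (int j + 1) \<and> odd j))"
          using R[rule_format, of j] j pt[of j] by simp
      qed
    qed
  qed
  finally show ?thesis using w0 by auto
qed

lemma snake_trans:
  assumes s: "\<tau> \<in> signed_perms m" and m: "m \<ge> 1"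
  shows "(down_up m \<tau> \<and> \<tau> 1 > 0) = (W m \<tau> ! 0 > 0 \<and> Alt 1 {} (W m \<tau>))"
proof -
  have w0: "W m \<tau> ! 0 = \<tau> 1" using m by simp
  have "down_up m \<tau> = Alt 1 {} (W m \<tau>)"
    unfolding down_up_def Alt_def W_len
  proof
    assume A: "\<forall>i\<in>{1..<m}. (odd i \<longrightarrow> \<tau> (int i + 1) < \<tau> (int i)) \<and> (even i \<longrightarrow> \<tau> (int i) < \<tau> (int i + 1))"
    show "\<forall>j. 0 < j \<longrightarrow> j < m \<longrightarrow> 1 + j \<notin> {} \<longrightarrow> (if odd (1 + j) then W m \<tau> ! (j - 1) < W m \<tau> ! j else W m \<tau> ! j < W m \<tau> ! (j - 1))"
    proof (intro allI impI)
      fix j assume j: "0 < j" "j < m" "1 + j \<notin> {}"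
      then show "if odd (1 + j) then W m \<tau> ! (j - 1) < W m \<tau> ! j else W m \<tau> ! j < W m \<tau> ! (j - 1)"
        using A[rule_format, of j] W_nth'[of j m \<tau>] W_nth[of j m \<tau>] by auto
    qed
  next
    assume B: "\<forall>j. 0 < j \<longrightarrow> j < m \<longrightarrow> 1 + j \<notin> {} \<longrightarrow> (if odd (1 + j) then W m \<tau> ! (j - 1) < W m \<tau> ! j else W m \<tau> ! j < W m \<tau> ! (j - 1))"
    show "\<forall>i\<in>{1..<m}. (odd i \<longrightarrow> \<tau> (int i + 1) < \<tau> (int i)) \<and> (even i \<longrightarrow> \<tau> (int i) < \<tau> (int i + 1))"
    proof
      fix i assume i: "i \<in> {1..<m}"
      then show "(odd i \<longrightarrow> \<tau> (int i + 1) < \<tau> (int i)) \<and> (even i \<longrightarrow> \<tau> (int i) < \<tau> (int i + 1))"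
        using B[rule_format, of i] W_nth'[of i m \<tau>] W_nth[of i m \<tau>] by auto
    qed
  qed
  then show ?thesis using w0 by auto
qed




lemma downup_Alt: "down_up m \<tau> = Alt 1 {} (W m \<tau>)"
  unfolding down_up_def Alt_def W_len
proof
  assume A: "\<forall>i\<in>{1..<m}. (odd i \<longrightarrow> \<tau> (int i + 1) < \<tau> (int i)) \<and> (even i \<longrightarrow> \<tau> (int i) < \<tau> (int i + 1))"
  show "\<forall>j. 0 < j \<longrightarrow> j < m \<longrightarrow> 1 + j \<notin> {} \<longrightarrow> (if odd (1 + j) then W m \<tau> ! (j - 1) < W m \<tau> ! j else W m \<tau> ! j < W m \<tau> ! (j - 1))"
  proof (intro allI impI)
    fix j assume j: "0 < j" "j < m" "1 + j \<notin> {}"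
    then show "if odd (1 + j) then W m \<tau> ! (j - 1) < W m \<tau> ! j else W m \<tau> ! j < W m \<tau> ! (j - 1)"
      using A[rule_format, of j] W_nth'[of j m \<tau>] W_nth[of j m \<tau>] by auto
  qed
next
  assume B: "\<forall>j. 0 < j \<longrightarrow> j < m \<longrightarrow> 1 + j \<notin> {} \<longrightarrow> (if odd (1 + j) then W m \<tau> ! (j - 1) < W m \<tau> ! j else W m \<tau> ! j < W m \<tau> ! (j - 1))"
  show "\<forall>i\<in>{1..<m}. (odd i \<longrightarrow> \<tau> (int i + 1) < \<tau> (int i)) \<and> (even i \<longrightarrow> \<tau> (int i) < \<tau> (int i + 1))"
  proof
    fix i assume i: "i \<in> {1..<m}"
    then show "(odd i \<longrightarrow> \<tau> (int i + 1) < \<tau> (int i)) \<and> (even i \<longrightarrow> \<tau> (int i) < \<tau> (int i + 1))"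
      using B[rule_format, of i] W_nth'[of i m \<tau>] W_nth[of i m \<tau>] by auto
  qed
qed

definition Pinv :: "nat \<Rightarrow> int list \<Rightarrow> int \<Rightarrow> int" where
  "Pinv m w i = (if 1 \<le> i \<and> i \<le> int m then w ! (nat i - 1) else i)"

lemma euler_US: "euler_num m = card {w\<in>US {1..int m}. Alt 1 {} w}"
proof -
  let ?A = "{\<tau> :: int \<Rightarrow> int. \<tau> permutes {1..int m} \<and> down_up m \<tau>}"
  have inj: "inj_on (W m) ?A"
  proof (rule inj_onI)
    fix x y assume x: "x \<in> ?A" and y: "y \<in> ?A" and e: "W m x = W m y"
    show "x = y"
    proof
      fix i
      show "x i = y i"
      proof (cases "1 \<le> i \<and> i \<le> int m")
        case True
        then have "W m x ! (nat i - 1) = W m y ! (nat i - 1)" using e by simp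
        moreover have k: "int (nat i - 1) + 1 = i" using True by auto
        ultimately show ?thesis using True W_nth[of "nat i - 1" m x] W_nth[of "nat i - 1" m y] by auto
      next
        case False
        then show ?thesis using x y permutes_not_in[of x "{1..int m}" i] permutes_not_in[of y "{1..int m}" i]
          by auto
      qed
    qed
  qed
  have "W m ` ?A = {w\<in>US {1..int m}. Alt 1 {} w}"
  proof
    show "W m ` ?A \<subseteq> {w\<in>US {1..int m}. Alt 1 {} w}"
    proof (rule image_subsetI)
      fix \<tau> assume "\<tau> \<in> ?A"
      then have p: "\<tau> permutes {1..int m}" and d: "down_up m \<tau>" by auto
      have ij: "inj_on \<tau> {1..int m}" using permutes_inj_on[OF p] .
      have im: "\<tau> ` {1..int m} = {1..int m}" using permutes_image[OF p] .
      let ?L = "map int [1..<Suc m]"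
      have Wm: "W m \<tau> = map \<tau> ?L" unfolding W_def by (simp only: map_map comp_def)
      have sL: "set ?L = {1..int m}"
      proof
        show "set ?L \<subseteq> {1..int m}" by auto
        show "{1..int m} \<subseteq> set ?L"
        proof
          fix x assume x: "x \<in> {1..int m}"
          then have "x = int (nat x)" "nat x \<in> {1..<Suc m}" by auto
          then show "x \<in> set ?L" by (metis image_eqI set_map set_upt)
        qed
      qed
      have dL: "distinct ?L" by (simp add: distinct_map)
      have "distinct (W m \<tau>)" unfolding Wm distinct_map using ij dL sL by simp
      moreover have "set (W m \<tau>) = {1..int m}"
      proof -
        have "set (map \<tau> ?L) = \<tau> ` set ?L" by (rule set_map)
        then show ?thesis unfolding Wm sL using im by simp
      qed
      ultimately have "W m \<tau> \<in> US {1..int m}" unfolding US_def by blast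
      moreover have "Alt 1 {} (W m \<tau>)" using d downup_Alt by blast
      ultimately show "W m \<tau> \<in> {w\<in>US {1..int m}. Alt 1 {} w}" by blast
    qed
    show "{w\<in>US {1..int m}. Alt 1 {} w} \<subseteq> W m ` ?A"
    proof
      fix w assume "w \<in> {w\<in>US {1..int m}. Alt 1 {} w}"
      then have dw: "distinct w" and sw: "set w = {1..int m}" and aw: "Alt 1 {} w" unfolding US_def by auto
      have len: "length w = m" using distinct_card[OF dw] sw by simp
      let ?t = "Pinv m w"
      have into: "?t ` {1..int m} \<subseteq> {1..int m}"
      proof
        fix y assume "y \<in> ?t ` {1..int m}"
        then obtain i where i: "i \<in> {1..int m}" "y = ?t i" by blast
        then have "y = w ! (nat i - 1)" "nat i - 1 < length w" using len unfolding Pinv_def by auto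
        then show "y \<in> {1..int m}" using sw by (metis nth_mem)
      qed
      have ij: "inj_on ?t {1..int m}"
      proof (rule inj_onI)
        fix x y assume x: "x \<in> {1..int m}" and y: "y \<in> {1..int m}" and e: "?t x = ?t y"
        then have "w ! (nat x - 1) = w ! (nat y - 1)" unfolding Pinv_def by auto
        moreover have "nat x - 1 < length w" "nat y - 1 < length w" using x y len by auto
        ultimately have "nat x - 1 = nat y - 1" using nth_eq_iff_index_eq[OF dw] by blast
        then show "x = y" using x y by auto
      qed
      have "?t ` {1..int m} = {1..int m}" using endo_inj_surj[OF _ into ij] by auto
      then have "bij_betw ?t {1..int m} {1..int m}" using ij by (simp add: bij_betw_def)
      then have p: "?t permutes {1..int m}" by (rule bij_imp_permutes) (auto simp: Pinv_def)
      have Wt: "W m ?t = w" by (rule nth_equalityI) (auto simp: len Pinv_def)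
      have "down_up m ?t" using downup_Alt Wt aw by simp
      then have "?t \<in> ?A" using p by blast
      then show "w \<in> W m ` ?A" by (rule image_eqI[where f="W m", OF Wt[symmetric]])
    qed
  qed
  then show ?thesis unfolding euler_num_def using card_image[OF inj] by simp
qed

definition flipset :: "nat \<Rightarrow> int set \<Rightarrow> int set" where
  "flipset m N = uminus ` N \<union> ({1..int m} - N)"

lemma signed_US:
  assumes P: "\<And>g w. smono (set w) g \<Longrightarrow> P (map g w) = P w"
  shows "card {w\<in>SW {1..int m}. P w} = 2 ^ m * card {w\<in>US {1..int m}. P w}"
proof -
  let ?I = "Pow {1..int m}"
  let ?B = "\<lambda>N. {w\<in>US (flipset m N). P w}"
  have eq: "{w\<in>SW {1..int m}. P w} = (\<Union>N\<in>?I. ?B N)"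
  proof
    show "{w\<in>SW {1..int m}. P w} \<subseteq> (\<Union>N\<in>?I. ?B N)"
    proof
      fix w assume "w \<in> {w\<in>SW {1..int m}. P w}"
      then have dw: "distinct (map abs w)" and sw: "set (map abs w) = {1..int m}" and pw: "P w"
        unfolding SW_def by auto
      have ia: "inj_on abs (set w)" using dw by (simp add: distinct_map)
      have d: "distinct w" using dw by (simp add: distinct_map)
      have absin: "\<And>x. x \<in> set w \<Longrightarrow> \<bar>x\<bar> \<in> {1..int m}" using sw by auto
      define N where "N = {i\<in>{1..int m}. - i \<in> set w}"
      have "set w = flipset m N"
      proof
        show "set w \<subseteq> flipset m N"
        proof
          fix x assume x: "x \<in> set w"
          show "x \<in> flipset m N"
          proof (cases "x > 0")
            case True
            have "- x \<notin> set w"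
            proof
              assume "- x \<in> set w"
              then have "- x = x" using ia x by (metis abs_minus_cancel inj_onD)
              then show False using True by simp
            qed
            then show ?thesis using True absin[OF x] unfolding flipset_def N_def by auto
          next
            case False
            then have "-x \<in> N" using absin[OF x] x unfolding N_def by auto
            then show ?thesis unfolding flipset_def by (metis UnI1 image_eqI minus_minus)
          qed
        qed
        show "flipset m N \<subseteq> set w"
        proof
          fix y assume "y \<in> flipset m N"
          then consider (a) "y \<in> uminus ` N" | (b) "y \<in> {1..int m}" "y \<notin> N" unfolding flipset_def by blast
          then show "y \<in> set w"
          proof cases
            case a then show ?thesis unfolding N_def by auto
          next
            case b
            then have "y \<in> set (map abs w)" using sw by simp
            then obtain x where x: "x \<in> set w" "\<bar>x\<bar> = y" by auto
            show ?thesis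
            proof (cases "x = y")
              case True then show ?thesis using x by simp
            next
              case False
              then have "x = - y" using x by auto
              then have "y \<in> N" using x b unfolding N_def by auto
              then show ?thesis using b by simp
            qed
          qed
        qed
      qed
      then have "w \<in> ?B N" using d pw unfolding US_def by blast
      moreover have "N \<in> ?I" unfolding N_def by auto
      ultimately show "w \<in> (\<Union>N\<in>?I. ?B N)" by blast
    qed
    show "(\<Union>N\<in>?I. ?B N) \<subseteq> {w\<in>SW {1..int m}. P w}"
    proof
      fix w assume "w \<in> (\<Union>N\<in>?I. ?B N)"
      then obtain N where N: "N \<subseteq> {1..int m}" and d: "distinct w" and sw: "set w = flipset m N" and pw: "P w"
        unfolding US_def by blast
      have ia: "inj_on abs (set w)"
      proof (rule inj_onI)
        fix a b assume a: "a \<in> set w" and b: "b \<in> set w" and e: "\<bar>a\<bar> = \<bar>b\<bar>"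
        show "a = b"
        proof (rule ccontr)
          assume "a \<noteq> b"
          then have ab: "a = - b" using e by (auto simp: abs_if split: if_splits)
          have "a \<in> flipset m N" "b \<in> flipset m N" using a b sw by auto
          moreover have Npos: "\<And>x. x \<in> N \<Longrightarrow> x \<ge> 1" using N by auto
          have cs: "\<And>x. x \<in> flipset m N \<Longrightarrow> (x < 0 \<and> -x \<in> N) \<or> (x > 0 \<and> x \<notin> N)"
          proof -
            fix x assume "x \<in> flipset m N"
            then consider (p) "x \<in> uminus ` N" | (q) "x \<in> {1..int m} - N" unfolding flipset_def by blast
            then show "(x < 0 \<and> -x \<in> N) \<or> (x > 0 \<and> x \<notin> N)"
            proof cases
              case p
              then obtain n where "n \<in> N" "x = - n" by blast
              then show ?thesis using Npos[of n] by simp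
            next
              case q then show ?thesis by simp
            qed
          qed
          ultimately have fa: "a \<in> flipset m N" "b \<in> flipset m N" by auto
          show False using ab cs[OF fa(1)] cs[OF fa(2)] by auto
        qed
      qed
      have "abs ` flipset m N = {1..int m}"
      proof
        show "abs ` flipset m N \<subseteq> {1..int m}" using N unfolding flipset_def by auto
        show "{1..int m} \<subseteq> abs ` flipset m N"
        proof
          fix i assume i: "i \<in> {1..int m}"
          show "i \<in> abs ` flipset m N"
          proof (cases "i \<in> N")
            case True
            then have "- i \<in> flipset m N" unfolding flipset_def by blast
            then show ?thesis using i by (metis abs_minus_cancel abs_of_nonneg atLeastAtMost_iff image_eqI order_trans zero_le_one)
          next
            case False
            then have "i \<in> flipset m N" using i unfolding flipset_def by blast
            then show ?thesis using i by (metis abs_of_nonneg atLeastAtMost_iff image_eqI order_trans zero_le_one)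
          qed
        qed
      qed
      then have "distinct (map abs w) \<and> set (map abs w) = {1..int m}"
        using d ia sw by (simp add: distinct_map)
      then show "w \<in> {w\<in>SW {1..int m}. P w}" using pw unfolding SW_def by blast
    qed
  qed
  have fin: "\<forall>N\<in>?I. finite (?B N)"
  proof
    fix N assume "N \<in> ?I"
    then have "finite (flipset m N)" unfolding flipset_def using finite_subset by blast
    then show "finite (?B N)" using finite_US by auto
  qed
  have rec: "\<And>N. N \<in> ?I \<Longrightarrow> {i\<in>{1..int m}. - i \<in> flipset m N} = N"
    unfolding flipset_def by auto
  have disj: "\<forall>N\<in>?I. \<forall>N'\<in>?I. N \<noteq> N' \<longrightarrow> ?B N \<inter> ?B N' = {}"
  proof (intro ballI impI)
    fix N N' assume N: "N \<in> ?I" and N': "N' \<in> ?I" and ne: "N \<noteq> N'"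
    show "?B N \<inter> ?B N' = {}"
    proof (rule ccontr)
      assume "?B N \<inter> ?B N' \<noteq> {}"
      then obtain w where "set w = flipset m N" "set w = flipset m N'" unfolding US_def by blast
      then have "flipset m N = flipset m N'" by simp
      then show False using rec[OF N] rec[OF N'] ne by metis
    qed
  qed
  have cardB: "\<And>N. N \<in> ?I \<Longrightarrow> card (?B N) = card {w\<in>US {1..int m}. P w}"
  proof -
    fix N assume N: "N \<in> ?I"
    have fN: "finite N" using N finite_subset by blast
    have "card (flipset m N) = card (uminus ` N) + card ({1..int m} - N)"
      unfolding flipset_def by (rule card_Un_disjoint) (use N fN in auto)
    also have "card (uminus ` N) = card N" by (rule card_image) (simp add: inj_on_def)
    also have "card ({1..int m} - N) = m - card N" using N fN by (simp add: card_Diff_subset)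
    also have "card N + (m - card N) = m"
    proof -
      have "card N \<le> card {1..int m}" using N by (intro card_mono) auto
      then show ?thesis by simp
    qed
    finally have cf: "card (flipset m N) = card {1..int m}" by simp
    show "card (?B N) = card {w\<in>US {1..int m}. P w}"
      by (rule us_inv[where P=P, OF _ _ cf P]) (use fN in \<open>auto simp: flipset_def\<close>)
  qed
  have "card {w\<in>SW {1..int m}. P w} = (\<Sum>N\<in>?I. card (?B N))"
    unfolding eq by (rule card_UN_disjoint) (use fin disj in auto)
  also have "\<dots> = (\<Sum>N\<in>?I. card {w\<in>US {1..int m}. P w})" using cardB by simp
  also have "\<dots> = 2 ^ m * card {w\<in>US {1..int m}. P w}" by (simp add: card_Pow)
  finally show ?thesis .
qed

lemma signed_euler: "card {w\<in>SW {1..int m}. Alt 1 {} w} = 2 ^ m * euler_num m"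
  unfolding euler_US by (rule signed_US) (rule Alt_inv)




lemma SW_len: "w \<in> SW X \<Longrightarrow> length w = card X"
  unfolding SW_def using distinct_card[of "map abs w"] by simp

lemma neg_card: "card {w\<in>SW X. Q (map uminus w)} = card {w\<in>SW X. Q w}"
proof -
  have inj: "inj_on (map uminus) {w\<in>SW X. Q w}" by (rule inj_onI) simp
  have ma: "\<And>w. map abs (map uminus w) = map abs (w :: int list)" by (induct_tac w) auto
  have sw: "\<And>w. (map uminus w \<in> SW X) = (w \<in> SW X)" unfolding SW_def mem_Collect_eq ma ..
  have "map uminus ` {w\<in>SW X. Q w} = {w\<in>SW X. Q (map uminus w)}"
  proof
    show "map uminus ` {w\<in>SW X. Q w} \<subseteq> {w\<in>SW X. Q (map uminus w)}"
      using sw by auto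
    show "{w\<in>SW X. Q (map uminus w)} \<subseteq> map uminus ` {w\<in>SW X. Q w}"
    proof
      fix w assume w: "w \<in> {w\<in>SW X. Q (map uminus w)}"
      have "w = map uminus (map uminus w)" by simp
      moreover have "map uminus w \<in> {w\<in>SW X. Q w}" using w sw by auto
      ultimately show "w \<in> map uminus ` {w\<in>SW X. Q w}" by (rule image_eqI)
    qed
  qed
  then show ?thesis using card_image[OF inj] by simp
qed

lemma alt_count: "card {v\<in>SW {1..int m}. Alt p {} v} = 2 ^ m * euler_num m"
proof (cases "odd p")
  case True
  then have "p mod 2 = 1 mod 2" by (simp add: odd_iff_mod_2_eq_one)
  then have "\<And>v. Alt p {} v = Alt 1 {} v" by (rule Alt_parity)
  then show ?thesis using signed_euler by simp
next
  case False
  then have "p mod 2 = 0 mod 2" by simp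
  then have "\<And>v. Alt p {} v = Alt 0 {} v" by (rule Alt_parity)
  also have "\<And>v. Alt 0 {} v = Alt 1 {} (map uminus v)"
    using Alt_neg[of 0 "map uminus v" for v] by simp
  finally have "\<And>v. Alt p {} v = Alt 1 {} (map uminus v)" .
  then have "card {v\<in>SW {1..int m}. Alt p {} v} = card {v\<in>SW {1..int m}. Alt 1 {} (map uminus v)}" by simp
  also have "\<dots> = card {v\<in>SW {1..int m}. Alt 1 {} v}" by (rule neg_card)
  finally show ?thesis using signed_euler by simp
qed

lemma P1_inv:
  assumes "smono (insert 0 (set w)) g" "g 0 = 0"
  shows "((map g w) ! 0 < 0 \<and> Alt 0 T (map g w)) = (w ! 0 < 0 \<and> Alt 0 T w)"
proof (cases w)
  case Nil then show ?thesis by simp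
next
  case (Cons a r)
  have "(g a < g 0) = (a < 0)" using smono_iff[OF assms(1)] Cons by simp
  moreover have "Alt 0 T (map g w) = Alt 0 T w" by (rule Alt_inv[OF smono_sub[OF assms(1)]]) auto
  ultimately show ?thesis using Cons assms(2) by simp
qed

lemma pos_count:
  assumes "finite X" "card X = m" "\<And>x. x \<in> X \<Longrightarrow> x > 0"
    and P: "\<And>g w. smono (insert 0 (set w)) g \<Longrightarrow> g 0 = 0 \<Longrightarrow> P (map g w) = P w"
  shows "card {w\<in>SW X. P w} = card {w\<in>SW {1..int m}. P w}"
  by (rule sw_inv[where P=P, OF _ _ _ _ _ P]) (use assms in auto)

lemma decomp:
  assumes s: "0 < s" "s < n" and T: "\<And>t. t \<in> T \<Longrightarrow> t < s"
  shows "card {w\<in>SW {1..int n}. w ! 0 < 0 \<and> Alt 0 (insert s T) w}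
    = (n choose s) * card {u\<in>SW {1..int s}. u ! 0 < 0 \<and> Alt 0 T u} * (2 ^ (n - s) * euler_num (n - s))"
proof -
  define P1 where "P1 u = (u ! 0 < 0 \<and> Alt 0 T u)" for u
  define P2 where "P2 v = Alt s {} v" for v
  let ?U = "{1..int n}"
  let ?I = "{A. A \<subseteq> ?U \<and> card A = s}"
  define piece where "piece A = (\<lambda>(u, v). u @ v) ` ({u\<in>SW A. P1 u} \<times> {v\<in>SW (?U - A). P2 v})" for A
  have P1i: "\<And>g w. smono (insert 0 (set w)) g \<Longrightarrow> g 0 = 0 \<Longrightarrow> P1 (map g w) = P1 w"
    unfolding P1_def by (rule P1_inv)
  have P2i: "\<And>g w. smono (insert 0 (set w)) g \<Longrightarrow> g 0 = 0 \<Longrightarrow> P2 (map g w) = P2 w"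
    unfolding P2_def by (rule Alt_inv) (erule smono_sub, blast)
  have main: "{w\<in>SW ?U. w ! 0 < 0 \<and> Alt 0 (insert s T) w} = (\<Union>A\<in>?I. piece A)"
  proof
    show "{w\<in>SW ?U. w ! 0 < 0 \<and> Alt 0 (insert s T) w} \<subseteq> (\<Union>A\<in>?I. piece A)"
    proof
      fix w assume "w \<in> {w\<in>SW ?U. w ! 0 < 0 \<and> Alt 0 (insert s T) w}"
      then have w: "w \<in> SW ?U" "w ! 0 < 0" "Alt 0 (insert s T) w" by auto
      have lw: "length w = n" using SW_len[OF w(1)] by simp
      define u where "u = take s w"
      define v where "v = drop s w"
      have wuv: "w = u @ v" unfolding u_def v_def by simp
      have lu: "length u = s" using lw s unfolding u_def by simp
      define A where "A = set (map abs u)"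
      have d0: "distinct (map abs w)" and st0: "set (map abs w) = ?U"
        using w(1) unfolding SW_def mem_Collect_eq by blast+
      have d: "distinct (map abs u @ map abs v)" and st: "set (map abs u @ map abs v) = ?U"
        using d0 st0 unfolding wuv map_append by blast+
      have du: "distinct (map abs u)" and dv: "distinct (map abs v)"
        and disj: "set (map abs u) \<inter> set (map abs v) = {}" using d unfolding distinct_append by blast+
      have cA: "card A = s" unfolding A_def using distinct_card[OF du] lu by simp
      have AU: "A \<subseteq> ?U" using st unfolding A_def set_append by blast
      have sv: "set (map abs v) = ?U - A" using st disj unfolding A_def set_append by blast
      have uA: "u \<in> SW A" unfolding SW_def A_def mem_Collect_eq using du by blast
      have vA: "v \<in> SW (?U - A)" unfolding SW_def mem_Collect_eq using dv sv by blast
      have alt: "Alt 0 T u \<and> Alt s {} v" using w(3) Alt_append[OF lu T] unfolding wuv by blast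
      have "u ! 0 = w ! 0" unfolding wuv using lu s by (simp add: nth_append)
      then have "u ! 0 < 0" using w(2) by simp
      then have p1: "P1 u" using alt unfolding P1_def by blast
      have p2: "P2 v" using alt unfolding P2_def by blast
      have "(u, v) \<in> {u\<in>SW A. P1 u} \<times> {v\<in>SW (?U - A). P2 v}" using uA vA p1 p2 by blast
      moreover have "w = (\<lambda>(u, v). u @ v) (u, v)" using wuv by simp
      ultimately have wA: "w \<in> piece A" unfolding piece_def by (rule rev_image_eqI)
      have "A \<in> ?I" using cA AU by blast
      then show "w \<in> (\<Union>A\<in>?I. piece A)" using wA by (rule UN_I)
    qed
    show "(\<Union>A\<in>?I. piece A) \<subseteq> {w\<in>SW ?U. w ! 0 < 0 \<and> Alt 0 (insert s T) w}"
    proof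
      fix w assume "w \<in> (\<Union>A\<in>?I. piece A)"
      then obtain A where AI: "A \<in> ?I" and wA: "w \<in> piece A" by blast
      from AI have A: "A \<subseteq> ?U" "card A = s" by auto
      from wA obtain x where x: "x \<in> {u\<in>SW A. P1 u} \<times> {v\<in>SW (?U - A). P2 v}"
        and wx: "w = (\<lambda>(u, v). u @ v) x" unfolding piece_def by (rule imageE)
      obtain u v where xuv: "x = (u, v)" by (cases x)
      have u: "u \<in> SW A" "P1 u" and v: "v \<in> SW (?U - A)" "P2 v" using x unfolding xuv by auto
      have wuv: "w = u @ v" using wx xuv by simp
      have lu: "length u = s" using SW_len[OF u(1)] A by simp
      have du: "distinct (map abs u)" "set (map abs u) = A" using u(1) unfolding SW_def by auto
      have dv: "distinct (map abs v)" "set (map abs v) = ?U - A" using v(1) unfolding SW_def by auto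
      have "distinct (map abs w)" unfolding wuv map_append distinct_append using du dv by blast
      moreover have "set (map abs w) = ?U" unfolding wuv map_append set_append using du dv A by blast
      ultimately have "w \<in> SW ?U" unfolding SW_def by blast
      moreover have "w ! 0 = u ! 0" unfolding wuv using lu s by (simp add: nth_append)
      moreover have "Alt 0 (insert s T) w" unfolding wuv using Alt_append[OF lu T] u(2) v(2)
        unfolding P1_def P2_def by blast
      ultimately show "w \<in> {w\<in>SW ?U. w ! 0 < 0 \<and> Alt 0 (insert s T) w}" using u(2) unfolding P1_def by simp
    qed
  qed
  have finI: "finite ?I" by auto
  have cardI: "card ?I = n choose s" using n_subsets[of ?U s] by simp
  have cp: "\<And>A. A \<in> ?I \<Longrightarrow> card (piece A) = card {u\<in>SW {1..int s}. P1 u} * (2 ^ (n - s) * euler_num (n - s))"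
  proof -
    fix A assume A: "A \<in> ?I"
    then have fA: "finite A" using finite_subset by blast
    have inj: "inj_on (\<lambda>(u, v). u @ v) ({u\<in>SW A. P1 u} \<times> {v\<in>SW (?U - A). P2 v})"
    proof (rule inj_onI)
      fix x y assume x: "x \<in> {u\<in>SW A. P1 u} \<times> {v\<in>SW (?U - A). P2 v}" and y: "y \<in> {u\<in>SW A. P1 u} \<times> {v\<in>SW (?U - A). P2 v}"
        and e: "(\<lambda>(u, v). u @ v) x = (\<lambda>(u, v). u @ v) y"
      obtain a b where ab: "x = (a, b)" by force
      obtain c d where cd: "y = (c, d)" by force
      have "length a = length c" using x y SW_len unfolding ab cd by auto
      then show "x = y" using e unfolding ab cd by simp
    qed
    have c1: "card {u\<in>SW A. P1 u} = card {u\<in>SW {1..int s}. P1 u}"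
      by (rule pos_count[where P=P1, OF fA _ _ P1i]) (use A in auto)
    have fC: "finite (?U - A)" by simp
    have cC: "card (?U - A) = n - s" using A fA by (simp add: card_Diff_subset)
    have c2: "card {v\<in>SW (?U - A). P2 v} = card {v\<in>SW {1..int (n - s)}. P2 v}"
      by (rule pos_count[where P=P2, OF fC cC _ P2i]) auto
    have c3: "card {v\<in>SW {1..int (n - s)}. P2 v} = 2 ^ (n - s) * euler_num (n - s)"
      unfolding P2_def by (rule alt_count)
    show "card (piece A) = card {u\<in>SW {1..int s}. P1 u} * (2 ^ (n - s) * euler_num (n - s))"
      unfolding piece_def card_image[OF inj] card_cartesian_product c1 c2 c3 ..
  qed
  have finP: "\<forall>A\<in>?I. finite (piece A)"
  proof
    fix A assume "A \<in> ?I"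
    then have "finite A" using finite_subset by blast
    then show "finite (piece A)" unfolding piece_def using finite_SW by auto
  qed
  have disj: "\<forall>A\<in>?I. \<forall>B\<in>?I. A \<noteq> B \<longrightarrow> piece A \<inter> piece B = {}"
  proof (intro ballI impI)
    fix A B assume A: "A \<in> ?I" and B: "B \<in> ?I" and ne: "A \<noteq> B"
    have key: "\<And>C w. C \<in> ?I \<Longrightarrow> w \<in> piece C \<Longrightarrow> set (map abs (take s w)) = C"
    proof -
      fix C w assume C: "C \<in> ?I" and w: "w \<in> piece C"
      from w obtain x where x: "x \<in> {u\<in>SW C. P1 u} \<times> {v\<in>SW (?U - C). P2 v}"
        and wx: "w = (\<lambda>(u, v). u @ v) x" unfolding piece_def by (rule imageE)
      obtain u v where xuv: "x = (u, v)" by (cases x)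
      have "u \<in> SW C" "w = u @ v" using x wx unfolding xuv by auto
      then obtain u v where "u \<in> SW C" "w = u @ v" by blast
      moreover then have "length u = s" using SW_len C by auto
      ultimately have "take s w = u" by simp
      then show "set (map abs (take s w)) = C" using \<open>u \<in> SW C\<close> unfolding SW_def by simp
    qed
    show "piece A \<inter> piece B = {}" using key[OF A] key[OF B] ne by blast
  qed
  have "card {w\<in>SW ?U. w ! 0 < 0 \<and> Alt 0 (insert s T) w} = (\<Sum>A\<in>?I. card (piece A))"
    unfolding main by (rule card_UN_disjoint[OF finI finP disj])
  also have "\<dots> = (\<Sum>A\<in>?I. card {u\<in>SW {1..int s}. P1 u} * (2 ^ (n - s) * euler_num (n - s)))"
    using cp by simp
  also have "\<dots> = (n choose s) * card {u\<in>SW {1..int s}. P1 u} * (2 ^ (n - s) * euler_num (n - s))"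
    using cardI by simp
  finally show ?thesis unfolding P1_def .
qed




definition dl :: "nat list \<Rightarrow> nat \<Rightarrow> nat list" where
  "dl ss n = map2 (\<lambda>a b. a - b) (ss @ [n]) (0 # ss)"

lemma dl_Nil[simp]: "dl [] n = [n]" by (simp add: dl_def)

lemma dl_snoc: "dl (ss @ [s]) n = dl ss s @ [n - s]"
proof -
  have "zip ((ss @ [s]) @ [n]) ((0 # ss) @ [s]) = zip (ss @ [s]) (0 # ss) @ zip [n] [s]"
    by (rule zip_append) simp
  then show ?thesis unfolding dl_def by simp
qed

lemma dl_len: "length (dl ss n) = Suc (length ss)" by (simp add: dl_def)

lemma dl_sum: "sorted_wrt (<) ss \<Longrightarrow> (\<forall>x\<in>set ss. x \<le> n) \<Longrightarrow> sum_list (dl ss n) = n"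
proof (induction ss arbitrary: n rule: rev_induct)
  case Nil then show ?case by simp
next
  case (snoc s ss)
  have "sorted_wrt (<) ss" "\<forall>x\<in>set ss. x \<le> s" using snoc.prems by (auto simp: sorted_wrt_append)
  then have "sum_list (dl ss s) = s" by (rule snoc.IH)
  moreover have "s \<le> n" using snoc.prems by simp
  ultimately show ?case by (simp add: dl_snoc)
qed

lemma prod_fact_dvd: "(\<Prod>g\<leftarrow>d. fact g :: nat) dvd fact (sum_list d)"
proof (induction d)
  case Nil then show ?case by simp
next
  case (Cons a r)
  have "fact a * fact (sum_list r) * (sum_list (a # r) choose a) = (fact (sum_list (a # r)) :: nat)"
    using binomial_fact_lemma[of a "a + sum_list r"] by simp
  moreover have "fact a * (\<Prod>g\<leftarrow>r. fact g) dvd (fact a * fact (sum_list r) :: nat)"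
    using Cons.IH by simp
  ultimately show ?case by (metis dvd_triv_left dvd_trans prod_list.Cons list.simps(9))
qed

lemma multinomial_snoc:
  assumes "sum_list d = s" "s \<le> n"
  shows "multinomial n (d @ [n - s]) = (n choose s) * multinomial s d"
proof -
  define P where "P = (\<Prod>g\<leftarrow>d. fact g :: nat)"
  define M where "M = fact s div P"
  have Pd: "P dvd fact s" unfolding P_def using prod_fact_dvd[of d] assms by simp
  have fs: "fact s = M * P" unfolding M_def using Pd by simp
  have fn: "fact n = (n choose s) * fact s * fact (n - s)"
    using binomial_fact_lemma[OF assms(2)] by (simp add: mult.commute mult.left_commute)
  have Ppos: "P > 0" unfolding P_def by (induction d) auto
  have "multinomial n (d @ [n - s]) = fact n div (P * fact (n - s))"
    unfolding multinomial_def P_def by simp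
  also have "fact n = ((n choose s) * M) * (P * fact (n - s))" using fn fs by simp
  also have "\<dots> div (P * fact (n - s)) = (n choose s) * M" using Ppos by simp
  finally show ?thesis unfolding multinomial_def M_def P_def by simp
qed

lemma snake_count:
  assumes m: "m \<ge> 1"
  shows "snake_num m = card {w\<in>SW {1..int m}. w ! 0 < 0 \<and> Alt 0 {} w}"
proof -
  have "snake_num m = card {w\<in>SW {1..int m}. w ! 0 > 0 \<and> Alt 1 {} w}"
    unfolding snake_num_def by (rule card_W) (use snake_trans[OF _ m] in blast)
  also have "\<dots> = card {w\<in>SW {1..int m}. (map uminus w) ! 0 > 0 \<and> Alt 1 {} (map uminus w)}"
    by (rule neg_card[symmetric])
  also have "{w\<in>SW {1..int m}. (map uminus w) ! 0 > 0 \<and> Alt 1 {} (map uminus w)}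
      = {w\<in>SW {1..int m}. w ! 0 < 0 \<and> Alt 0 {} w}"
  proof (rule Collect_cong, rule conj_cong[OF refl])
    fix w assume w: "w \<in> SW {1..int m}"
    have "length w = m" using SW_len[OF w] by simp
    then have "(map uminus w) ! 0 = - (w ! 0)" using m by simp
    moreover have "Alt 1 {} (map uminus w) = Alt 0 {} w"
      using Alt_neg[of 1 w] Alt_parity[of "Suc (Suc 0)" 0 w] by simp
    ultimately show "((map uminus w) ! 0 > 0 \<and> Alt 1 {} (map uminus w)) = (w ! 0 < 0 \<and> Alt 0 {} w)"
      by simp
  qed
  finally show ?thesis .
qed

lemma count_list:
  "sorted_wrt (<) ss \<Longrightarrow> set ss \<subseteq> {1..<n} \<Longrightarrow> n \<ge> 1 \<Longrightarrow>
   card {w\<in>SW {1..int n}. w ! 0 < 0 \<and> Alt 0 (set ss) w}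
   = multinomial n (dl ss n) * snake_num (hd (dl ss n)) * (\<Prod>g\<leftarrow>tl (dl ss n). 2 ^ g * euler_num g)"
proof (induction ss arbitrary: n rule: rev_induct)
  case Nil
  have "multinomial n [n] = 1" unfolding multinomial_def by simp
  then show ?case using snake_count[OF Nil.prems(3)] by simp
next
  case (snoc s ss)
  have so: "sorted_wrt (<) ss" and lt: "\<And>x. x \<in> set ss \<Longrightarrow> x < s"
    using snoc.prems(1) by (auto simp: sorted_wrt_append)
  have s: "1 \<le> s" "s < n" using snoc.prems(2) by auto
  have sub: "set ss \<subseteq> {1..<s}" using snoc.prems(2) lt by auto
  have IH: "card {w\<in>SW {1..int s}. w ! 0 < 0 \<and> Alt 0 (set ss) w}
   = multinomial s (dl ss s) * snake_num (hd (dl ss s)) * (\<Prod>g\<leftarrow>tl (dl ss s). 2 ^ g * euler_num g)"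
    using snoc.IH[OF so sub s(1)] .
  have "card {w\<in>SW {1..int n}. w ! 0 < 0 \<and> Alt 0 (set (ss @ [s])) w}
      = card {w\<in>SW {1..int n}. w ! 0 < 0 \<and> Alt 0 (insert s (set ss)) w}" by simp
  also have "\<dots> = (n choose s) * card {u\<in>SW {1..int s}. u ! 0 < 0 \<and> Alt 0 (set ss) u} * (2 ^ (n - s) * euler_num (n - s))"
    by (rule decomp) (use s lt in auto)
  finally have c: "card {w\<in>SW {1..int n}. w ! 0 < 0 \<and> Alt 0 (set (ss @ [s])) w}
      = (n choose s) * card {u\<in>SW {1..int s}. u ! 0 < 0 \<and> Alt 0 (set ss) u} * (2 ^ (n - s) * euler_num (n - s))" .
  have ne: "dl ss s \<noteq> []" using dl_len[of ss s] by auto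
  have "\<forall>x\<in>set ss. x \<le> s" using lt by (meson less_imp_le)
  then have sm: "sum_list (dl ss s) = s" by (rule dl_sum[OF so])
  have mn: "multinomial n (dl (ss @ [s]) n) = (n choose s) * multinomial s (dl ss s)"
    unfolding dl_snoc by (rule multinomial_snoc[OF sm]) (use s in simp)
  have hd: "hd (dl (ss @ [s]) n) = hd (dl ss s)" unfolding dl_snoc using ne by simp
  have tl: "tl (dl (ss @ [s]) n) = tl (dl ss s) @ [n - s]" unfolding dl_snoc using ne by simp
  show ?case unfolding c IH mn hd tl by (simp add: algebra_simps)
qed

theorem lemma3p1:
  fixes n :: nat and S :: "nat set"
  assumes "n \<ge> 1" and "S \<subseteq> {1..n-1}"
  shows "let ss = sorted_list_of_set S;
             d = map2 (\<lambda>a b. a - b) (ss @ [n]) (0 # ss)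
         in card {\<sigma> \<in> signed_perms n. \<sigma> 1 < 0 \<and> DB_hat n \<sigma> \<subseteq> S}
            = multinomial n d * snake_num (hd d) * (\<Prod>g\<leftarrow>tl d. 2 ^ g * euler_num g)"
proof -
  define ss where "ss = sorted_list_of_set S"
  have fin: "finite S" using assms(2) finite_subset by blast
  have sss: "set ss = S" unfolding ss_def using fin by simp
  have so: "sorted_wrt (<) ss" unfolding ss_def by (rule sorted_list_of_set.strict_sorted_key_list_of_set)
  have sub: "set ss \<subseteq> {1..<n}"
  proof
    fix x assume "x \<in> set ss"
    then have "x \<in> {1..n-1}" using assms(2) sss by blast
    then show "x \<in> {1..<n}" using assms(1) by auto
  qed
  have "card {\<sigma> \<in> signed_perms n. \<sigma> 1 < 0 \<and> DB_hat n \<sigma> \<subseteq> S}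
      = card {w\<in>SW {1..int n}. w ! 0 < 0 \<and> Alt 0 S w}"
    by (rule card_W) (rule DB_trans[OF _ assms])
  also have "\<dots> = multinomial n (dl ss n) * snake_num (hd (dl ss n)) * (\<Prod>g\<leftarrow>tl (dl ss n). 2 ^ g * euler_num g)"
    using count_list[OF so sub assms(1)] sss by simp
  finally show ?thesis unfolding Let_def dl_def ss_def .
qed


end
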